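(* Let $(\mathcal{X},\mathcal{Y},u,S)$ be a Blackwell approachability game in which every halfspace $H\supseteq S$ is forceable. Then for every horizon $T\ge1$ there is a strategy for Player 1 which, at each time $t\le T$, receives a prediction $v^t\in\mathbb{R}^d$ of the next payoff (arbitrary, revealed before $x^t$ is chosen) and chooses $x^t\in\mathcal{X}$ depending only on $v^1,\dots,v^t$ and past payoffs, such that for every sequence of predictions and every (possibly adaptive) sequence of Player 2 actions $y^1,\dots,y^T\in\mathcal{Y}$, \[ \min_{\hat{s}\in S}\Big\|\hat{s}-\frac1T\sum_{t=1}^Tu(x^t,y^t)\Big\|_2\le\frac{1}{\sqrt T}\Big(1+\frac2T\sum_{t=1}^T\|u(x^t,y^t)-v^t\|_2^2\Big). \]
   Context: A Blackwell approachability game $(\mathcal{X},\mathcal{Y},u,S)$ consists of compact convex action sets $\mathcal{X},\mathcal{Y}$, a biaffine vector payoff $u:\mathcal{X}\times\mathcal{Y}\to\mathbb{R}^d$, and a closed convex target set $S\subseteq\mathbb{R}^d$; at each time $t$ Player 1 chooses $x^t\in\mathcal{X}$, then Player 2 chooses $y^t\in\mathcal{Y}$, and Player 1 receives $u(x^t,y^t)$. A halfspace $H=\{z:\langle a,z\rangle\le b\}$ is forceable if there exists $x^*\in\mathcal{X}$ with $u(x^*,y)\in H$ for all $y\in\mathcal{Y}$. *)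

theory Defs
  imports "HOL-Analysis.Analysis"
begin

definition biaffine_on ::
  "'a::real_vector set \<Rightarrow> 'b::real_vector set \<Rightarrow> ('a \<Rightarrow> 'b \<Rightarrow> 'c::real_vector) \<Rightarrow> bool" where
  "biaffine_on X Y u \<longleftrightarrow>
     (\<forall>x\<in>X. \<forall>x'\<in>X. \<forall>y\<in>Y. \<forall>l::real. 0 \<le> l \<and> l \<le> 1 \<longrightarrow>
        u ((1 - l) *\<^sub>R x + l *\<^sub>R x') y = (1 - l) *\<^sub>R u x y + l *\<^sub>R u x' y) \<and>
     (\<forall>x\<in>X. \<forall>y\<in>Y. \<forall>y'\<in>Y. \<forall>l::real. 0 \<le> l \<and> l \<le> 1 \<longrightarrow>
        u x ((1 - l) *\<^sub>R y + l *\<^sub>R y') = (1 - l) *\<^sub>R u x y + l *\<^sub>R u x y')"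

definition blackwell_game ::
  "'a::euclidean_space set \<Rightarrow> 'b::euclidean_space set \<Rightarrow> ('a \<Rightarrow> 'b \<Rightarrow> 'c::euclidean_space)
   \<Rightarrow> 'c set \<Rightarrow> bool" where
  "blackwell_game X Y u S \<longleftrightarrow>
     compact X \<and> convex X \<and> X \<noteq> {} \<and> compact Y \<and> convex Y \<and> Y \<noteq> {} \<and>
     biaffine_on X Y u \<and> closed S \<and> convex S \<and> S \<noteq> {}"

definition halfspace :: "'c::euclidean_space \<Rightarrow> real \<Rightarrow> 'c set" where
  "halfspace a b = {z. inner a z \<le> b}"

definition forceable ::
  "'a set \<Rightarrow> 'b set \<Rightarrow> ('a \<Rightarrow> 'b \<Rightarrow> 'c) \<Rightarrow> 'c set \<Rightarrow> bool" where
  "forceable X Y u H \<longleftrightarrow> (\<exists>xs\<in>X. \<forall>y\<in>Y. u xs y \<in> H)"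

end

theory Submission
  imports Defs
begin

lemma step_lemma:
  fixes U v u s0 :: "'c::euclidean_space" and t :: real
  assumes S: "closed S" "convex S" "s0 \<in> S" and t: "t \<ge> 1"
    and c: "c = closest_point S ((1/t) *\<^sub>R (U+v))"
    and f: "inner (U + v - t *\<^sub>R c) u \<le> inner (U + v - t *\<^sub>R c) c"
  shows "(norm (U + u - t *\<^sub>R c))\<^sup>2 \<le> (norm (U - (t-1) *\<^sub>R s0))\<^sup>2 + (norm (u - v))\<^sup>2"
proof -
  define a where "a = U + v - t *\<^sub>R c"
  define r where "r = U - (t-1) *\<^sub>R s0"
  define w where "w = (1/t) *\<^sub>R (U+v)"
  have cS: "c \<in> S" using c S closest_point_in_set by (metis empty_iff)
  define z where "z = (1/t) *\<^sub>R ((t-1) *\<^sub>R s0 + c)"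
  have zS: "z \<in> S"
  proof -
    have "(1/t) *\<^sub>R ((t-1) *\<^sub>R s0) = (1 - 1/t) *\<^sub>R s0" using t
      by (simp add: diff_divide_distrib)
    then have "z = (1 - 1/t) *\<^sub>R s0 + (1/t) *\<^sub>R c"
      by (simp add: z_def scaleR_add_right)
    then show ?thesis using convexD_alt[OF S(2) S(3) cS, of "1/t"] t by simp
  qed
  have "inner (w - c) (z - c) \<le> 0" using closest_point_dot[OF S(2) S(1) zS] c w_def by simp
  moreover have "a = t *\<^sub>R (w - c)" using t by (simp add: a_def w_def algebra_simps)
  moreover have "(t-1) *\<^sub>R (s0 - c) = t *\<^sub>R (z - c)" using t
    by (simp add: z_def algebra_simps)
  ultimately have A2: "inner a ((t-1) *\<^sub>R (s0 - c)) \<le> 0"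
    using t by (simp add: mult_nonneg_nonpos)
  have A1: "inner a u \<le> inner a c" using f a_def by simp
  have v: "v = a - r - (t-1) *\<^sub>R s0 + t *\<^sub>R c" by (simp add: a_def r_def algebra_simps)
  have e1: "U + u - t *\<^sub>R c = a + (u - v)" by (simp add: a_def)
  have "(norm (a + (u - v)))\<^sup>2 = inner a a + 2 * inner a u - 2 * inner a v + (norm (u-v))\<^sup>2"
    by (simp add: power2_norm_eq_inner inner_add inner_diff inner_commute algebra_simps)
  also have "inner a v = inner a a - inner a r - (t-1) * inner a s0 + t * inner a c"
    by (simp add: v inner_add inner_diff)
  finally have E: "(norm (a + (u - v)))\<^sup>2 = - inner a a + 2 * inner a u + 2 * inner a r + 2*(t-1) * inner a s0 - 2 * t * inner a c + (norm (u-v))\<^sup>2"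
    by simp
  have A2': "(t-1) * inner a s0 - (t-1) * inner a c \<le> 0" using A2
    by (simp add: inner_diff algebra_simps)
  have "0 \<le> inner (a - r) (a - r)" by simp
  then have "2 * inner a r - inner a a \<le> inner r r"
    by (simp add: inner_diff inner_commute algebra_simps)
  moreover have "inner r r = (norm r)\<^sup>2" by (simp add: power2_norm_eq_inner)
  ultimately show ?thesis unfolding e1 E r_def[symmetric] using A1 A2' by (simp add: algebra_simps)
qed

lemma final_ineq:
  fixes E T :: real assumes "E \<ge> 0" "T \<ge> 1"
  shows "sqrt E / T \<le> (1 / sqrt T) * (1 + (2 / T) * E)"
proof -
  have sT: "sqrt T > 0" using assms by simp
  have TT: "T = sqrt T * sqrt T" using assms by simp
  have "sqrt E \<le> sqrt T + 2 * E / sqrt T"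
  proof (cases "E \<le> T")
    case True
    then have "sqrt E \<le> sqrt T" by simp
    moreover have "0 \<le> 2 * E / sqrt T" using assms sT by simp
    ultimately show ?thesis by linarith
  next
    case False
    then have "sqrt T \<le> sqrt E" by simp
    then have "sqrt E * sqrt T \<le> sqrt E * sqrt E" by (rule mult_left_mono) (simp add: assms)
    also have "... = E" using assms by simp
    finally have "sqrt E \<le> E / sqrt T" using sT by (simp add: field_simps)
    moreover have "E / sqrt T \<le> 2 * E / sqrt T" using assms sT by (simp add: divide_right_mono)
    moreover have "0 \<le> sqrt T" using assms by simp
    ultimately show ?thesis by linarith
  qed
  then have "sqrt E / T \<le> (sqrt T + 2 * E / sqrt T) / T"
    using assms by (simp add: divide_right_mono)
  also have "... = (1 / sqrt T) * (1 + (2 / T) * E)"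
    using sT assms by (subst (2) TT) (simp add: field_simps)
  finally show ?thesis .
qed

lemma exists_force:
  fixes X :: "'a::euclidean_space set" and Y :: "'b::euclidean_space set"
    and u :: "'a \<Rightarrow> 'b \<Rightarrow> 'c::euclidean_space" and S :: "'c set"
  assumes game: "blackwell_game X Y u S"
    and force: "\<And>a b. a \<noteq> 0 \<Longrightarrow> S \<subseteq> halfspace a b \<Longrightarrow> forceable X Y u (halfspace a b)"
    and t: "t > 0"
  shows "\<exists>x\<in>X. \<forall>y\<in>Y. inner (W - t *\<^sub>R closest_point S ((1/t) *\<^sub>R W)) (u x y)
             \<le> inner (W - t *\<^sub>R closest_point S ((1/t) *\<^sub>R W)) (closest_point S ((1/t) *\<^sub>R W))"
proof -
  define c where "c = closest_point S ((1/t) *\<^sub>R W)"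
  define a where "a = W - t *\<^sub>R c"
  have cl: "closed S" "convex S" "S \<noteq> {}" "X \<noteq> {}" using game by (auto simp: blackwell_game_def)
  show ?thesis
  proof (cases "a = 0")
    case True then show ?thesis using cl unfolding a_def[symmetric] c_def[symmetric] by auto
  next
    case False
    have "S \<subseteq> halfspace a (inner a c)"
    proof
      fix s assume sS: "s \<in> S"
      have "inner ((1/t) *\<^sub>R W - c) (s - c) \<le> 0"
        using closest_point_dot[OF cl(2) cl(1) sS] c_def by simp
      moreover have "a = t *\<^sub>R ((1/t) *\<^sub>R W - c)" using t by (simp add: a_def algebra_simps)
      ultimately have "inner a (s - c) \<le> 0" using t by (simp add: mult_nonneg_nonpos)
      then show "s \<in> halfspace a (inner a c)" by (simp add: halfspace_def inner_diff)
    qed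
    from force[OF False this] show ?thesis
      unfolding a_def[symmetric] c_def[symmetric] forceable_def halfspace_def by auto
  qed
qed


theorem mainTheorem6:
  fixes X :: "'a::euclidean_space set" and Y :: "'b::euclidean_space set"
    and u :: "'a \<Rightarrow> 'b \<Rightarrow> 'c::euclidean_space" and S :: "'c set"
  assumes game: "blackwell_game X Y u S"
    and force: "\<And>a b. a \<noteq> 0 \<Longrightarrow> S \<subseteq> halfspace a b \<Longrightarrow> forceable X Y u (halfspace a b)"
    and T: "T \<ge> (1::nat)"
  shows "\<exists>\<sigma> :: 'c list \<Rightarrow> 'c list \<Rightarrow> 'a.
           (\<forall>vs gs. \<sigma> vs gs \<in> X) \<and>
           (\<forall>(v :: nat \<Rightarrow> 'c) (y :: nat \<Rightarrow> 'b) (x :: nat \<Rightarrow> 'a).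
              (\<forall>t\<in>{1..T}. y t \<in> Y) \<longrightarrow>
              (\<forall>t\<in>{1..T}. x t = \<sigma> (map v [1..<Suc t]) (map (\<lambda>s. u (x s) (y s)) [1..<t])) \<longrightarrow>
              infdist ((1 / real T) *\<^sub>R (\<Sum>t=1..T. u (x t) (y t))) S
                \<le> (1 / sqrt (real T)) *
                   (1 + (2 / real T) * (\<Sum>t=1..T. (norm (u (x t) (y t) - v t))\<^sup>2)))"
proof -
  have cl: "closed S" "convex S" "S \<noteq> {}" "X \<noteq> {}" using game by (auto simp: blackwell_game_def)
  define P where "P = (\<lambda>(W::'c) (t::real) (x::'a). \<forall>y\<in>Y.
      inner (W - t *\<^sub>R closest_point S ((1/t) *\<^sub>R W)) (u x y)
      \<le> inner (W - t *\<^sub>R closest_point S ((1/t) *\<^sub>R W)) (closest_point S ((1/t) *\<^sub>R W)))"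
  define \<sigma> where "\<sigma> = (\<lambda>(vs::'c list) (gs::'c list).
      let W = sum_list gs + last vs; t = real (length vs) in
      if \<exists>x\<in>X. P W t x then SOME x. x \<in> X \<and> P W t x else SOME x. x \<in> X)"
  have \<sigma>X: "\<sigma> vs gs \<in> X" for vs gs
  proof -
    have "\<exists>x. x \<in> X" using cl by auto
    then show ?thesis unfolding \<sigma>_def Let_def
      by (simp split: if_split) (metis (no_types, lifting) someI_ex)
  qed
  have \<sigma>P: "P (sum_list gs + last vs) (real (length vs)) (\<sigma> vs gs)" if "vs \<noteq> []" for vs gs
  proof -
    have "\<exists>x\<in>X. P (sum_list gs + last vs) (real (length vs)) x"
      unfolding P_def using exists_force[OF game force] that by simp
    then show ?thesis unfolding \<sigma>_def Let_def
      by (simp split: if_split) (metis (no_types, lifting) someI_ex)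
  qed
  show ?thesis
  proof (rule exI[of _ \<sigma>], intro conjI allI impI)
    fix vs gs show "\<sigma> vs gs \<in> X" by (rule \<sigma>X)
  next
    fix v :: "nat \<Rightarrow> 'c" and y :: "nat \<Rightarrow> 'b" and x :: "nat \<Rightarrow> 'a"
    assume yY: "\<forall>t\<in>{1..T}. y t \<in> Y"
      and xs: "\<forall>t\<in>{1..T}. x t = \<sigma> (map v [1..<Suc t]) (map (\<lambda>s. u (x s) (y s)) [1..<t])"
    define g where "g = (\<lambda>s. u (x s) (y s))"
    define e where "e = (\<lambda>s. (norm (g s - v s))\<^sup>2)"
    define c where "c = (\<lambda>t::nat. closest_point S ((1/real t) *\<^sub>R (sum g {1..<t} + v t)))"
    have cS: "c t \<in> S" for t using closest_point_in_set cl c_def by metis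
    have Pt: "inner (sum g {1..<t} + v t - real t *\<^sub>R c t) (g t)
              \<le> inner (sum g {1..<t} + v t - real t *\<^sub>R c t) (c t)" if "t \<in> {1..T}" for t
    proof -
      have "P (sum g {1..<t} + v t) (real t) (x t)"
        using \<sigma>P[of "map v [1..<Suc t]" "map g [1..<t]"] xs that
        by (simp add: g_def interv_sum_list_conv_sum_set_nat)
      then show ?thesis using yY that unfolding P_def c_def g_def by auto
    qed
    have main: "t \<in> {1..T} \<Longrightarrow> (norm (sum g {1..t} - real t *\<^sub>R c t))\<^sup>2 \<le> sum e {1..t}" for t
    proof (induction t)
      case 0 then show ?case by simp
    next
      case (Suc n)
      have split: "sum g {1..Suc n} = sum g {1..<Suc n} + g (Suc n)"
        by (simp add: atLeastLessThanSuc_atLeastAtMost[symmetric] sum.atLeastLessThan_Suc)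
      have splite: "sum e {1..Suc n} = sum e {1..n} + e (Suc n)" by simp
      show ?case
      proof (cases "n = 0")
        case True
        obtain s0 where "s0 \<in> S" using cl by auto
        from step_lemma[OF cl(1,2) this _ _ Pt[OF Suc.prems]] True
        show ?thesis using Suc.prems by (simp add: c_def e_def split)
      next
        case False
        then have IH: "(norm (sum g {1..n} - real n *\<^sub>R c n))\<^sup>2 \<le> sum e {1..n}"
          using Suc by simp
        have h1: "real (Suc n) \<ge> 1" by simp
        have h2: "c (Suc n) = closest_point S ((1/real (Suc n)) *\<^sub>R (sum g {1..<Suc n} + v (Suc n)))"
          by (simp only: c_def)
        note st = step_lemma[OF cl(1,2) cS[of n] h1 h2 Pt[OF Suc.prems]]
        have q1: "sum g {1..<Suc n} = sum g {1..n}" by (simp add: atLeastLessThanSuc_atLeastAtMost)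
        have q2: "real (Suc n) - 1 = real n" by simp
        have "(norm (sum g {1..n} + g (Suc n) - real (Suc n) *\<^sub>R c (Suc n)))\<^sup>2
            \<le> (norm (sum g {1..n} - real n *\<^sub>R c n))\<^sup>2 + e (Suc n)"
          using st unfolding q1 q2 e_def .
        moreover have "sum g {1..Suc n} = sum g {1..n} + g (Suc n)" by simp
        ultimately show ?thesis using IH splite by simp
      qed
    qed
    have Tin: "T \<in> {1..T}" using T by simp
    have E0: "0 \<le> sum e {1..T}" by (simp add: e_def sum_nonneg)
    have "infdist ((1 / real T) *\<^sub>R sum g {1..T}) S \<le> dist ((1 / real T) *\<^sub>R sum g {1..T}) (c T)"
      by (rule infdist_le[OF cS])
    also have "\<dots> = norm (sum g {1..T} - real T *\<^sub>R c T) / real T"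
    proof -
      have "(1 / real T) *\<^sub>R sum g {1..T} - c T = (1 / real T) *\<^sub>R (sum g {1..T} - real T *\<^sub>R c T)"
        using T by (simp add: algebra_simps)
      then show ?thesis using T by (simp add: dist_norm)
    qed
    also have "\<dots> \<le> sqrt (sum e {1..T}) / real T"
      using main[OF Tin] T by (simp add: divide_right_mono real_le_rsqrt)
    also have "\<dots> \<le> (1 / sqrt (real T)) * (1 + (2 / real T) * sum e {1..T})"
      using final_ineq[OF E0] T by simp
    finally show "infdist ((1 / real T) *\<^sub>R (\<Sum>t=1..T. u (x t) (y t))) S
                \<le> (1 / sqrt (real T)) *
                   (1 + (2 / real T) * (\<Sum>t=1..T. (norm (u (x t) (y t) - v t))\<^sup>2))"
      by (simp add: g_def e_def)
  qed
qed

end
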